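(* Let $n>10^{(10^{13})}$ be an integer with factorization $n=\prod_{i=1}^r p_i^{a_i}$, where $p_i$ is the $i$-th prime, $a_i\ge 0$, and $p_r$ is the largest prime divisor of $n$. For integers $k\ge1$ put $x_k=(k\log n)^{1/k}$, and for a prime $p$ with $x_{k+1}<p\le x_k$ for some integer $k\ge 1$ define $U_n(p)=\left\lfloor \frac{\log(k\log n)}{\log p}\right\rfloor$. Let $G(m)=\frac{\sigma(m)}{m\log\log m}$. Suppose that for some index $s$, $U_n(p_s)$ is defined and $a_s>U_n(p_s)$. Then $G(n)<G(n/p_s)$. Consequently, if $n$ is the least counterexample to Robin's inequality (the least integer $n>5040$ with $\sigma(n)\ge e^\gamma n\log\log n$), then $a_i\le U_n(p_i)$ for all $1\le i\le r$.
   Context: $\sigma(m)=\sum_{d\mid m} d$, $\gamma$ is the Euler–Mascheroni constant, $\log$ is the natural logarithm. *)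

theory Defs
  imports "HOL-Analysis.Analysis" "HOL-Computational_Algebra.Primes"
begin

definition sigma :: "nat \<Rightarrow> real" where
  "sigma m = (\<Sum>d\<in>{d. d dvd m}. real d)"

definition G :: "nat \<Rightarrow> real" where
  "G m = sigma m / (real m * ln (ln (real m)))"

definition xk :: "nat \<Rightarrow> nat \<Rightarrow> real" where
  "xk n k = (real k * ln (real n)) powr (1 / real k)"

definition U_defined :: "nat \<Rightarrow> nat \<Rightarrow> bool" where
  "U_defined n p \<longleftrightarrow> (\<exists>k\<ge>1. xk n (k + 1) < real p \<and> real p \<le> xk n k)"

definition U :: "nat \<Rightarrow> nat \<Rightarrow> int" where
  "U n p = (let k = (THE k. k \<ge> 1 \<and> xk n (k + 1) < real p \<and> real p \<le> xk n k)
            in \<lfloor>ln (real k * ln (real n)) / ln (real p)\<rfloor>)"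

definition least_robin_counterexample :: "nat \<Rightarrow> bool" where
  "least_robin_counterexample n \<longleftrightarrow>
     n > 5040 \<and> sigma n \<ge> exp euler_mascheroni * real n * ln (ln (real n)) \<and>
     (\<forall>m. 5040 < m \<and> m < n \<longrightarrow> sigma m < exp euler_mascheroni * real m * ln (ln (real m)))"

end

theory Submission
  imports Defs
begin

lemma xk_ln:
  assumes "k \<ge> 1" "ln (real n) > 0"
  shows "xk n k > 0" "ln (xk n k) = ln (real k * ln (real n)) / real k"
proof -
  have "real k * ln (real n) > 0" using assms by simp
  then show "xk n k > 0" "ln (xk n k) = ln (real k * ln (real n)) / real k"
    using assms unfolding xk_def by (simp_all add: ln_powr)
qed

lemma xk_dec:
  assumes "k \<ge> 1" "ln (real n) \<ge> 3"
  shows "xk n (Suc k) < xk n k"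
proof -
  define L where "L = ln (real n)"
  define A where "A = ln (real k * L)"
  have L0: "L > 0" using assms by (simp add: L_def)
  have kL: "real k * L \<ge> 3" using assms L_def
    by (metis mult_1 mult_right_mono of_nat_1 of_nat_mono order_trans dual_order.trans linorder_le_cases less_le_trans zero_le_numeral
        nat_le_real_less)
  have A1: "A > 1"
  proof -
    have "exp 1 < (3::real)" using e_less_272 by simp
    then have "exp 1 < real k * L" using kL by simp
    then show ?thesis unfolding A_def
      by (metis exp_gt_zero less_trans ln_exp ln_less_cancel_iff)
  qed
  have "ln (real (Suc k) * L) = ln ((real (Suc k) / real k) * (real k * L))"
    using assms by simp
  also have "\<dots> = ln (real (Suc k) / real k) + A"
    unfolding A_def using assms L0 by (subst ln_mult) auto
  also have "ln (real (Suc k) / real k) \<le> real (Suc k) / real k - 1"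
    using assms by (intro ln_le_minus_one) simp
  also have "real (Suc k) / real k - 1 = 1 / real k" using assms by (simp add: field_simps)
  finally have B: "ln (real (Suc k) * L) \<le> 1 / real k + A" by simp
  have "ln (xk n (Suc k)) = ln (real (Suc k) * L) / real (Suc k)"
    using xk_ln[of "Suc k" n] L0 by (simp add: L_def)
  also have "\<dots> \<le> (1 / real k + A) / real (Suc k)"
    using B by (simp add: divide_right_mono)
  also have "\<dots> < A / real k"
  proof -
    have kp: "real k > 0" using assms by simp
    have "(1 / real k + A) * real k = 1 + A * real k" using kp by (simp add: field_simps)
    also have "\<dots> < A * real (Suc k)" using A1 by (simp add: algebra_simps)
    finally have "(1 / real k + A) * real k < A * real (Suc k)" .
    then show ?thesis using kp by (simp add: divide_less_eq less_divide_eq mult.commute)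
  qed
  also have "A / real k = ln (xk n k)" using xk_ln[of k n] assms L0 by (simp add: L_def A_def)
  finally show ?thesis
    using xk_ln(1)[of k n] xk_ln(1)[of "Suc k" n] assms L0 by (simp add: L_def)
qed

lemma xk_antimono:
  assumes "1 \<le> i" "i \<le> j" "ln (real n) \<ge> 3"
  shows "xk n j \<le> xk n i"
proof -
  have "(\<lambda>t. xk n (t + 1)) (j - 1) \<le> (\<lambda>t. xk n (t + 1)) (i - 1)"
    by (rule lift_Suc_antimono_le) (use xk_dec[of _ n] assms in \<open>auto intro: less_imp_le\<close>)
  then show ?thesis using assms by simp
qed

lemma THE_k:
  assumes "ln (real n) \<ge> 3" "k \<ge> 1" "xk n (k + 1) < real p" "real p \<le> xk n k"
  shows "(THE k. k \<ge> 1 \<and> xk n (k + 1) < real p \<and> real p \<le> xk n k) = k"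
proof (rule the_equality)
  show "k \<ge> 1 \<and> xk n (k + 1) < real p \<and> real p \<le> xk n k" using assms by simp
next
  fix j assume j: "j \<ge> 1 \<and> xk n (j + 1) < real p \<and> real p \<le> xk n j"
  show "j = k"
  proof (rule ccontr)
    assume "j \<noteq> k"
    then consider "j < k" | "k < j" by linarith
    then show False
    proof cases
      case 1
      then have "xk n k \<le> xk n (j+1)" using xk_antimono[of "j+1" k n] assms by simp
      then show False using j assms by linarith
    next
      case 2
      then have "xk n j \<le> xk n (k+1)" using xk_antimono[of "k+1" j n] assms by simp
      then show False using j assms by linarith
    qed
  qed
qed

lemma sigma_le:
  assumes p: "prime p" and nm: "n = p*m" and m: "m>0" and pa: "p^a dvd n" and a: "a\<ge>1"
  shows "sigma n \<le> real p * sigma m + sigma m / real p^(a-1)"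
proof -
  have n0: "n > 0" using nm m p by (simp add: prime_gt_0_nat)
  have p0: "p > 0" using p by (simp add: prime_gt_0_nat)
  define S1 where "S1 = (\<lambda>d. p*d) ` {d. d dvd m}"
  define S2 where "S2 = {d. d dvd n \<and> \<not> p dvd d}"
  have fm: "finite {d. d dvd m}" using m by (simp add: finite_divisors_nat)
  have fn: "finite {d. d dvd n}" using n0 by (simp add: finite_divisors_nat)
  have f1: "finite S1" using fm by (simp add: S1_def)
  have f2: "finite S2" using fn by (simp add: S2_def)
  have sub: "{d. d dvd n} \<subseteq> S1 \<union> S2"
  proof
    fix d assume "d \<in> {d. d dvd n}"
    then have dn: "d dvd n" by simp
    show "d \<in> S1 \<union> S2"
    proof (cases "p dvd d")
      case True
      then obtain e where e: "d = p*e" by (auto elim: dvdE)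
      then have "e dvd m" using dn nm p0 by simp
      then show ?thesis using e by (auto simp: S1_def)
    next
      case False then show ?thesis using dn by (simp add: S2_def)
    qed
  qed
  have "sigma n \<le> (\<Sum>d\<in>S1 \<union> S2. real d)"
    unfolding sigma_def by (rule sum_mono2) (use sub f1 f2 in auto)
  also have "\<dots> \<le> (\<Sum>d\<in>S1. real d) + (\<Sum>d\<in>S2. real d)"
  proof -
    have "(\<Sum>d\<in>S1 \<union> S2. real d) + (\<Sum>d\<in>S1 \<inter> S2. real d) = (\<Sum>d\<in>S1. real d) + (\<Sum>d\<in>S2. real d)"
      by (rule sum.union_inter) (use f1 f2 in auto)
    moreover have "(\<Sum>d\<in>S1 \<inter> S2. real d) \<ge> 0" by (simp add: sum_nonneg)
    ultimately show ?thesis by linarith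
  qed
  also have "(\<Sum>d\<in>S1. real d) = real p * sigma m"
  proof -
    have "inj_on (\<lambda>d. p*d) {d. d dvd m}" using p0 by (simp add: inj_on_def)
    then have "(\<Sum>d\<in>S1. real d) = (\<Sum>d\<in>{d. d dvd m}. real (p*d))"
      unfolding S1_def by (simp add: sum.reindex)
    also have "\<dots> = real p * sigma m" by (simp add: sigma_def sum_distrib_left)
    finally show ?thesis .
  qed
  also have "(\<Sum>d\<in>S2. real d) \<le> sigma m / real p^(a-1)"
  proof -
    have inj: "inj_on (\<lambda>d. p^(a-1)*d) S2" using p0 by (simp add: inj_on_def)
    have img: "(\<lambda>d. p^(a-1)*d) ` S2 \<subseteq> {d. d dvd m}"
    proof
      fix x assume "x \<in> (\<lambda>d. p^(a-1)*d) ` S2"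
      then obtain d where d: "d \<in> S2" "x = p^(a-1)*d" by auto
      have "coprime p d" using d(1) p by (simp add: S2_def prime_imp_coprime)
      then have "coprime (p^a) d" by simp
      then have "p^a * d dvd n" using d(1) pa by (simp add: S2_def divides_mult)
      moreover have "p^a * d = p * (p^(a-1)*d)" using a
        by (metis (no_types, lifting) mult.assoc power_eq_if not_one_le_zero)
      ultimately have "p * (p^(a-1)*d) dvd p * m" using nm by simp
      then show "x \<in> {d. d dvd m}" using d p0 by simp
    qed
    have "real p^(a-1) * (\<Sum>d\<in>S2. real d) = (\<Sum>d\<in>S2. real (p^(a-1)*d))"
      by (simp add: sum_distrib_left)
    also have "\<dots> = (\<Sum>x\<in>(\<lambda>d. p^(a-1)*d) ` S2. real x)"
      using inj by (simp add: sum.reindex)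
    also have "\<dots> \<le> sigma m" unfolding sigma_def
      by (rule sum_mono2) (use img fm in auto)
    finally have "real p^(a-1) * (\<Sum>d\<in>S2. real d) \<le> sigma m" .
    moreover have "real p^(a-1) > 0" using p0 by simp
    ultimately show ?thesis by (simp add: field_simps mult.commute)
  qed
  finally show ?thesis by simp
qed


lemma part1:
  assumes n10: "real n \<ge> 10^10" and p: "prime p" and k1: "k \<ge> 1"
    and lo: "xk n (k + 1) < real p" and hi: "real p \<le> xk n k"
    and aU: "of_nat (multiplicity p n) > U n p"
  shows "G n < G (n div p)" and "real (n div p) > 5040"
proof -
  define L where "L = ln (real n)"
  define a where "a = multiplicity p n"
  define lp where "lp = ln (real p)"
  define m where "m = n div p"
  have n0: "n > 0" using n10 by (metis not_gr0 of_nat_0 not_le zero_less_power zero_less_numeral)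
  have rn0: "real n > 0" using n0 by simp
  have p2: "p \<ge> 2" using p by (simp add: prime_ge_2_nat)
  have rp2: "real p \<ge> 2" using p2 by simp
  have lp0: "lp > 0" using p2 by (simp add: lp_def)
  have e3: "exp 1 < (3::real)" using e_less_272 by simp
  have L3: "L \<ge> 3"
  proof -
    have "exp (3::real) = exp 1 ^ 3" by (simp add: exp_of_nat_mult[symmetric])
    also have "\<dots> \<le> 3 ^ 3" using e3 by (intro power_mono) auto
    also have "\<dots> \<le> real n" using n10 by simp
    finally show ?thesis unfolding L_def using rn0 by (simp add: ln_ge_iff)
  qed
  have L0: "L > 0" using L3 by simp
  have Uk: "U n p = \<lfloor>ln (real k * L) / lp\<rfloor>"
    using THE_k[of n k p] L3 k1 lo hi by (simp add: U_def L_def lp_def)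
  have h1: "real k * lp \<le> ln (real k * L)"
  proof -
    have "lp \<le> ln (xk n k)" unfolding lp_def using hi rp2 by simp
    also have "\<dots> = ln (real k * L) / real k" using xk_ln[of k n] k1 L0 by (simp add: L_def)
    finally show ?thesis using k1 by (simp add: field_simps)
  qed
  have h2: "ln (real (k+1) * L) < real (k+1) * lp"
  proof -
    have "ln (real (k+1) * L) / real (k+1) = ln (xk n (k+1))"
      using xk_ln[of "k+1" n] L0 by (simp add: L_def)
    also have "\<dots> < lp" unfolding lp_def using lo xk_ln(1)[of "k+1" n] L0 by (simp add: L_def)
    finally show ?thesis by (simp add: field_simps)
  qed
  have kU: "int k \<le> U n p"
  proof -
    have "real k \<le> ln (real k * L) / lp" using h1 lp0 by (simp add: field_simps)
    then show ?thesis unfolding Uk by (simp add: le_floor_iff)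
  qed
  have ak: "a \<ge> k + 1" using kU aU unfolding a_def by linarith
  have pdvd: "p dvd n" using ak n0 p prime_multiplicity_gt_zero_iff[of p n] unfolding a_def by simp
  have pan: "p^a dvd n" unfolding a_def by (rule multiplicity_dvd)
  have nm: "n = p * m" using pdvd unfolding m_def by simp
  have m0: "m > 0" using nm n0 by (cases m) auto
  have rnm: "real n = real p * real m" using nm by simp
  have pL: "real p \<le> L"
  proof -
    have "k - 1 < 2 ^ (k - 1)" by (rule less_exp)
    then have "k \<le> 2 ^ (k - 1)" using k1 by linarith
    then have "real k \<le> 2 ^ (k - 1)" by (metis of_nat_le_iff of_nat_numeral of_nat_power)
    then have "ln (real k) \<le> ln (2 ^ (k - 1))" using k1 by simp
    also have "\<dots> = real (k - 1) * ln 2" by (simp add: ln_realpow)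
    also have "\<dots> \<le> real (k - 1) * lp" unfolding lp_def using rp2 by (intro mult_left_mono) auto
    finally have "ln (real k) \<le> real (k - 1) * lp" .
    moreover have "ln (real k * L) = ln (real k) + ln L" using k1 L0 by (simp add: ln_mult)
    moreover have "real (k - 1) = real k - 1" using k1 by simp
    ultimately have "lp \<le> ln L" using h1 by (simp add: algebra_simps)
    then show ?thesis unfolding lp_def using L0 rp2 by simp
  qed
  have sq: "sqrt (real n) \<ge> 10^5"
  proof -
    have "sqrt ((10::real)^5 * 10^5) \<le> sqrt (real n)" using n10 by (intro real_sqrt_le_mono) simp
    then show ?thesis by simp
  qed
  have L2: "L \<le> 2 * sqrt (real n)"
  proof -
    have "ln (sqrt (real n)) \<le> sqrt (real n) - 1" using rn0 by (intro ln_le_minus_one) simp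
    then show ?thesis unfolding L_def using rn0 by (simp add: ln_sqrt)
  qed
  have m5: "real m \<ge> 50000"
  proof -
    have "sqrt (real n) * sqrt (real n) = real p * real m" using rnm rn0 by simp
    also have "\<dots> \<le> 2 * sqrt (real n) * real m" using pL L2 by (intro mult_right_mono) auto
    finally have "sqrt (real n) * sqrt (real n) \<le> (2 * real m) * sqrt (real n)" by (simp add: algebra_simps)
    then have "sqrt (real n) \<le> 2 * real m" using sq by (meson mult_right_le_imp_le less_le_trans zero_less_numeral zero_less_power)
    then show ?thesis using sq by simp
  qed
  show "real (n div p) > 5040" using m5 unfolding m_def by simp
  define lm where "lm = ln (real m)"
  have lm1: "lm > 1"
  proof -
    have "exp 1 < real m" using e3 m5 by simp
    then show ?thesis unfolding lm_def by (metis exp_gt_zero less_trans ln_exp ln_less_cancel_iff)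
  qed
  have Lm: "L = lp + lm" unfolding L_def lp_def lm_def using rnm p2 m0 by (simp add: ln_mult)
  define P where "P = real p ^ a"
  have P0: "P > 0" unfolding P_def using p2 by simp
  have pk1: "real p ^ (k+1) > real (k+1) * L"
  proof -
    have "ln (real p ^ (k+1)) = real (k+1) * lp" unfolding lp_def using p2 by (subst ln_realpow) auto
    then have "ln (real (k+1) * L) < ln (real p ^ (k+1))" using h2 by simp
    then show ?thesis using L0 p2 by simp
  qed
  have Pk: "P \<ge> real p ^ (k+1)" unfolding P_def using ak rp2 by (intro power_increasing) auto
  have key: "L * ln lm < P * lp"
  proof -
    have "ln lm \<le> ln L" using lm1 Lm lp0 by simp
    also have "\<dots> \<le> ln (real (k+1) * L)" using L0 by simp
    also have "\<dots> < real (k+1) * lp" by (rule h2)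
    finally have "L * ln lm < L * (real (k+1) * lp)" using L0 by simp
    also have "\<dots> = (real (k+1) * L) * lp" by simp
    also have "\<dots> < P * lp" using pk1 Pk lp0 by (intro mult_strict_right_mono) auto
    finally show ?thesis .
  qed
  have diff: "ln lm - ln L \<le> - lp / L"
  proof -
    have "ln (lm / L) \<le> lm / L - 1" using lm1 L0 by (intro ln_le_minus_one) simp
    moreover have "ln (lm / L) = ln lm - ln L" using lm1 L0 by (simp add: ln_div)
    moreover have "lm / L - 1 = - lp / L" using Lm L0 by (simp add: field_simps)
    ultimately show ?thesis by simp
  qed
  have crit: "(1 + 1 / P) * ln lm < ln L"
  proof -
    have "ln lm / P < lp / L" using key P0 L0 by (simp add: field_simps)
    then show ?thesis using diff by (simp add: algebra_simps)
  qed
  have sigm: "sigma m > 0"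
  proof -
    have "real m \<le> sigma m" unfolding sigma_def
      by (rule member_le_sum) (use m0 finite_divisors_nat in auto)
    then show ?thesis using m0 by simp
  qed
  have sb: "sigma n \<le> real p * sigma m + sigma m / real p^(a-1)"
    by (rule sigma_le[OF p nm m0 pan]) (use ak in simp)
  have "real p * sigma m + sigma m / real p^(a-1) = real p * sigma m * (1 + 1 / P)"
  proof -
    have "P = real p * real p ^ (a - 1)" unfolding P_def using ak
      by (metis Suc_diff_le diff_Suc_1 le_add2 le_trans power_Suc)
    then show ?thesis using p2 by (simp add: field_simps)
  qed
  with sb have sb2: "sigma n \<le> real p * sigma m * (1 + 1 / P)" by simp
  have lL: "ln L > 0" using L3 by simp
  have lml: "ln lm > 0" using lm1 by simp
  have "sigma n * (real m * ln lm) \<le> real p * sigma m * (1 + 1 / P) * (real m * ln lm)"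
    using sb2 m0 lml by (intro mult_right_mono) auto
  also have "\<dots> = sigma m * real n * ((1 + 1 / P) * ln lm)" using rnm by (simp add: algebra_simps)
  also have "\<dots> < sigma m * real n * ln L" using crit sigm rn0 by (intro mult_strict_left_mono) auto
  finally have fin: "sigma n * (real m * ln lm) < sigma m * (real n * ln L)" by (simp add: algebra_simps)
  show "G n < G (n div p)"
    unfolding G_def m_def[symmetric] L_def[symmetric] lm_def[symmetric]
    using fin rn0 lL m0 lml by (simp add: field_simps)
qed

lemma lnln_pos:
  assumes "real m > 3"
  shows "ln (ln (real m)) > 0"
proof -
  have "exp 1 < (3::real)" using e_less_272 by simp
  then have "exp 1 < real m" using assms by simp
  then have "ln (real m) > 1" by (metis exp_gt_zero less_trans ln_exp ln_less_cancel_iff)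
  then show ?thesis by simp
qed

theorem theorem3:
  fixes n :: nat
  assumes "n > 10 ^ (10 ^ 13)"
  shows "(\<forall>p. prime p \<and> U_defined n p \<and> of_nat (multiplicity p n) > U n p
              \<longrightarrow> G n < G (n div p))
         \<and> (least_robin_counterexample n \<longrightarrow>
              (\<forall>p. prime p \<and> p \<le> Max (prime_factors n) \<and> U_defined n p
                   \<longrightarrow> of_nat (multiplicity p n) \<le> U n p))"
proof -
  have "(10::nat) ^ 10 \<le> 10 ^ (10 ^ 13)" by (rule power_increasing) auto
  then have "(10::nat) ^ 10 < n" using assms by (rule le_less_trans)
  then have "real ((10::nat) ^ 10) \<le> real n" by (simp only: of_nat_le_iff less_imp_le)
  then have n10: "real n \<ge> 10 ^ 10" by simp
  have P1: "G n < G (n div p) \<and> real (n div p) > 5040"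
    if q1: "prime p" and q2: "U_defined n p" and q3: "of_nat (multiplicity p n) > U n p" for p
  proof -
    obtain k where "k \<ge> 1" "xk n (k + 1) < real p" "real p \<le> xk n k"
      using q2 unfolding U_defined_def by blast
    then show ?thesis using part1[OF n10 q1 _ _ _ q3] by blast
  qed
  show ?thesis
  proof (intro conjI allI impI)
    fix p assume "prime p \<and> U_defined n p \<and> of_nat (multiplicity p n) > U n p"
    then show "G n < G (n div p)" using P1 by blast
  next
    fix p assume lrc: "least_robin_counterexample n"
      and hp: "prime p \<and> p \<le> Max (prime_factors n) \<and> U_defined n p"
    show "of_nat (multiplicity p n) \<le> U n p"
    proof (rule ccontr)
      assume "\<not> of_nat (multiplicity p n) \<le> U n p"
      then have "of_nat (multiplicity p n) > U n p" by simp
      then have GG: "G n < G (n div p)" and m5: "real (n div p) > 5040" using P1 hp by blast+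
      define m where "m = n div p"
      define c :: real where "c = exp euler_mascheroni"
      have rn: "real n > 3" using n10 by simp
      have n0: "n > 0" using rn by simp
      have p2: "p \<ge> 2" using hp prime_ge_2_nat by blast
      have mn: "m < n" unfolding m_def using n0 p2 by simp
      have m50: "5040 < m" using m5 unfolding m_def by simp
      have An: "real n * ln (ln (real n)) > 0" using lnln_pos[OF rn] rn by simp
      have Am: "real m * ln (ln (real m)) > 0" using lnln_pos[of m] m5 unfolding m_def by simp
      have "sigma n \<ge> c * (real n * ln (ln (real n)))"
        using lrc unfolding least_robin_counterexample_def c_def by (simp add: mult.assoc)
      then have "G n \<ge> c" unfolding G_def using An by (simp add: pos_le_divide_eq)
      then have "G m > c" using GG unfolding m_def by simp
      then have "sigma m > c * (real m * ln (ln (real m)))"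
        unfolding G_def using Am by (simp add: pos_less_divide_eq)
      moreover have "sigma m < c * (real m * ln (ln (real m)))"
        using lrc mn m50 unfolding least_robin_counterexample_def c_def by (simp add: mult.assoc)
      ultimately show False by simp
    qed
  qed
qed

end
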